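(* Let $d\ge2$ and let $H$ be a finite family of closed halfspaces in $\mathbb{R}^d$ whose bounding hyperplanes pass through the origin, such that no $h\in H$ is bounded by the hyperplane $T_d=\{x\in\mathbb{R}^d\mid x_d=0\}$. Let $C=\bigcap_{h\in H}h$. If $C\subseteq T_d^>\cup\{0\}$, where $T_d^>=\{x\in\mathbb{R}^d\mid x_d>0\}$, then there is a subfamily $H'\subseteq H$ with $|H'|\le 2d-2$ such that $\bigcap_{h\in H'}h\subseteq T_d^>\cup\{0\}$. *)

theory Defs
  imports "HOL-Analysis.Analysis"
begin

definition origin_halfspace :: "(real^'n) set \<Rightarrow> bool" where
  "origin_halfspace h \<longleftrightarrow> (\<exists>a::real^'n. a \<noteq> 0 \<and> h = {x. inner a x \<le> 0})"

end

theory Submission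
  imports Defs
begin

abbreviation cch :: "'a::euclidean_space set \<Rightarrow> 'a set" where
  "cch X \<equiv> convex_cone hull X"

lemma cch_sum:
  assumes "finite T" "T \<subseteq> X" "\<forall>c\<in>T. 0 \<le> u c"
  shows "(\<Sum>c\<in>T. u c *\<^sub>R c) \<in> cch X"
  using assms
proof (induction T rule: finite_induct)
  case empty
  then show ?case by (simp add: convex_cone_hull_contains_0)
next
  case (insert x F)
  then show ?case
    by (simp add: convex_cone_hull_add convex_cone_hull_mul hull_inc)
qed

lemma cch_explicit:
  assumes "finite B" "x \<in> cch B"
  shows "\<exists>u. (\<forall>c\<in>B. 0 \<le> u c) \<and> x = (\<Sum>c\<in>B. u c *\<^sub>R c)"
proof -
  let ?E = "{y. \<exists>u. (\<forall>c\<in>B. 0 \<le> u c) \<and> y = (\<Sum>c\<in>B. u c *\<^sub>R c)}"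
  have "convex_cone ?E"
    unfolding convex_cone_iff
  proof (intro conjI ballI allI impI)
    show "0 \<in> ?E" by (rule CollectI, rule exI[of _ "\<lambda>_. 0"]) simp
  next
    fix x y assume "x \<in> ?E" "y \<in> ?E"
    then obtain u v where "\<forall>c\<in>B. 0 \<le> u c" "x = (\<Sum>c\<in>B. u c *\<^sub>R c)"
      "\<forall>c\<in>B. 0 \<le> v c" "y = (\<Sum>c\<in>B. v c *\<^sub>R c)" by auto
    then show "x + y \<in> ?E"
      by (intro CollectI exI[of _ "\<lambda>c. u c + v c"]) (simp add: scaleR_add_left sum.distrib)
  next
    fix x and c :: real assume "x \<in> ?E" "0 \<le> c"
    then obtain u where "\<forall>c\<in>B. 0 \<le> u c" "x = (\<Sum>c\<in>B. u c *\<^sub>R c)" by auto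
    with \<open>0 \<le> c\<close> show "c *\<^sub>R x \<in> ?E"
      by (intro CollectI exI[of _ "\<lambda>d. c * u d"]) (simp add: scaleR_sum_right)
  qed
  moreover have "B \<subseteq> ?E"
  proof
    fix b assume "b \<in> B"
    have "(\<Sum>c\<in>B. (if c = b then 1 else 0) *\<^sub>R c) = (\<Sum>c\<in>B. if c = b then c else 0)"
      by (rule sum.cong) auto
    also have "\<dots> = b" using \<open>b \<in> B\<close> assms(1) by simp
    finally show "b \<in> ?E"
      by (intro CollectI exI[of _ "\<lambda>c. if c = b then 1 else 0"]) auto
  qed
  ultimately have "cch B \<subseteq> ?E" by (simp add: hull_minimal)
  then show ?thesis using assms(2) by blast
qed

lemma cara_mod:
  fixes B :: "'a::euclidean_space set"
  assumes "finite B" "subspace L" "\<forall>c\<in>B. 0 \<le> u c" "y - (\<Sum>c\<in>B. u c *\<^sub>R c) \<in> L"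
  shows "\<exists>T\<subseteq>B. \<exists>w. (\<forall>c\<in>T. 0 < w c) \<and> y - (\<Sum>c\<in>T. w c *\<^sub>R c) \<in> L
          \<and> (\<forall>\<mu>. (\<Sum>c\<in>T. \<mu> c *\<^sub>R c) \<in> L \<longrightarrow> (\<forall>c\<in>T. \<mu> c = 0))"
  using assms
proof (induction "card B" arbitrary: B u rule: less_induct)
  case less
  have drop: "\<exists>T\<subseteq>B. \<exists>w. (\<forall>c\<in>T. 0 < w c) \<and> y - (\<Sum>c\<in>T. w c *\<^sub>R c) \<in> L
          \<and> (\<forall>\<mu>. (\<Sum>c\<in>T. \<mu> c *\<^sub>R c) \<in> L \<longrightarrow> (\<forall>c\<in>T. \<mu> c = 0))"
    if v: "\<forall>c\<in>B. 0 \<le> v c" "y - (\<Sum>c\<in>B. v c *\<^sub>R c) \<in> L" "c \<in> B" "v c = 0" for v c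
  proof -
    have "(\<Sum>d\<in>B. v d *\<^sub>R d) = (\<Sum>d\<in>B - {c}. v d *\<^sub>R d)"
      using v less.prems(1) by (simp add: sum.remove)
    moreover have "card (B - {c}) < card B" using v less.prems(1) by (meson card_Diff1_less)
    ultimately have "\<exists>T\<subseteq>B - {c}. \<exists>w. (\<forall>c\<in>T. 0 < w c) \<and> y - (\<Sum>c\<in>T. w c *\<^sub>R c) \<in> L
          \<and> (\<forall>\<mu>. (\<Sum>c\<in>T. \<mu> c *\<^sub>R c) \<in> L \<longrightarrow> (\<forall>c\<in>T. \<mu> c = 0))"
      using v less.prems by (intro less.hyps[of "B - {c}" v]) auto
    then show ?thesis by blast
  qed
  show ?case
  proof (cases "\<exists>c\<in>B. u c = 0")
    case True
    then show ?thesis using drop less.prems by blast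
  next
    case False
    hence pos: "\<forall>c\<in>B. 0 < u c" using less.prems(3) by force
    show ?thesis
    proof (cases "\<forall>\<mu>. (\<Sum>c\<in>B. \<mu> c *\<^sub>R c) \<in> L \<longrightarrow> (\<forall>c\<in>B. \<mu> c = 0)")
      case True then show ?thesis using pos less.prems by blast
    next
      case False
      then obtain \<mu> c0 where mu: "(\<Sum>c\<in>B. \<mu> c *\<^sub>R c) \<in> L" "c0 \<in> B" "\<mu> c0 \<noteq> 0" by blast
      obtain \<nu> c1 where nu: "(\<Sum>c\<in>B. \<nu> c *\<^sub>R c) \<in> L" "c1 \<in> B" "\<nu> c1 > 0"
      proof (cases "\<mu> c0 > 0")
        case True then show ?thesis using mu that by blast
      next
        case False
        have "(\<Sum>c\<in>B. (- \<mu> c) *\<^sub>R c) \<in> L"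
          using mu(1) subspace_neg[OF less.prems(2)] by (simp add: sum_negf)
        then show ?thesis using mu False by (intro that[of "\<lambda>c. - \<mu> c" c0]) auto
      qed
      define P where "P = {c\<in>B. \<nu> c > 0}"
      have P: "finite P" "P \<noteq> {}" using nu less.prems(1) by (auto simp: P_def)
      define t where "t = Min ((\<lambda>c. u c / \<nu> c) ` P)"
      have "t \<in> (\<lambda>c. u c / \<nu> c) ` P" unfolding t_def using P by (intro Min_in) auto
      then obtain c2 where c2: "c2 \<in> P" "t = u c2 / \<nu> c2" by blast
      have tle: "t \<le> u c / \<nu> c" if "c \<in> P" for c
        unfolding t_def using P that by (intro Min_le) auto
      have tpos: "t > 0" using c2 pos by (auto simp: P_def)
      define u' where "u' = (\<lambda>c. u c - t * \<nu> c)"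
      have u'nn: "\<forall>c\<in>B. 0 \<le> u' c"
      proof
        fix c assume c: "c \<in> B"
        show "0 \<le> u' c"
        proof (cases "\<nu> c > 0")
          case True
          then have "t \<le> u c / \<nu> c" using tle c by (auto simp: P_def)
          then show ?thesis using True by (simp add: u'_def pos_le_divide_eq)
        next
          case False
          then have "t * \<nu> c \<le> 0" using tpos by (simp add: mult_nonneg_nonpos)
          then show ?thesis using pos c by (simp add: u'_def) (smt (verit))
        qed
      qed
      have u'c2: "u' c2 = 0" using c2 by (auto simp: u'_def P_def)
      have "y - (\<Sum>c\<in>B. u' c *\<^sub>R c) = (y - (\<Sum>c\<in>B. u c *\<^sub>R c)) + t *\<^sub>R (\<Sum>c\<in>B. \<nu> c *\<^sub>R c)"
        by (simp add: u'_def scaleR_diff_left sum_subtractf scaleR_sum_right algebra_simps)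
      also have "\<dots> \<in> L"
        using less.prems(2,4) nu(1) by (simp add: subspace_add subspace_mul)
      finally show ?thesis using drop[OF u'nn _ _ u'c2] c2 by (auto simp: P_def)
    qed
  qed
qed

lemma dim_mod:
  fixes T :: "'a::euclidean_space set"
  assumes "finite T" "subspace L" "\<forall>\<mu>. (\<Sum>c\<in>T. \<mu> c *\<^sub>R c) \<in> L \<longrightarrow> (\<forall>c\<in>T. \<mu> c = 0)"
  shows "dim L + card T \<le> dim (span (L \<union> T))"
proof -
  obtain BL where BL: "BL \<subseteq> L" "independent BL" "L \<subseteq> span BL" "card BL = dim L"
    by (rule basis_exists)
  have fBL: "finite BL" using BL(2) by (rule finiteI_independent)
  have disj: "BL \<inter> T = {}"
  proof (rule ccontr)
    assume "BL \<inter> T \<noteq> {}"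
    then obtain c where c: "c \<in> BL" "c \<in> T" by blast
    have "(\<Sum>d\<in>T. (if d = c then 1 else 0) *\<^sub>R d) = (\<Sum>d\<in>T. if d = c then d else 0)"
      by (rule sum.cong) auto
    also have "\<dots> = c" using c assms(1) by simp
    finally have "(\<Sum>d\<in>T. (if d = c then 1 else 0) *\<^sub>R d) \<in> L" using c BL(1) by auto
    then show False using assms(3) c by fastforce
  qed
  have ind: "independent (BL \<union> T)"
  proof -
    have "\<mu> v = 0" if s: "(\<Sum>x\<in>BL \<union> T. \<mu> x *\<^sub>R x) = 0" and v: "v \<in> BL \<union> T" for \<mu> v
    proof -
      have sp: "(\<Sum>x\<in>BL. \<mu> x *\<^sub>R x) + (\<Sum>x\<in>T. \<mu> x *\<^sub>R x) = 0"
        using s by (simp add: sum.union_disjoint fBL assms(1) disj)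
      have "(\<Sum>x\<in>BL. \<mu> x *\<^sub>R x) \<in> L"
        using BL(1) assms(2) by (intro subspace_sum) (auto simp: subspace_mul)
      then have "- (\<Sum>x\<in>BL. \<mu> x *\<^sub>R x) \<in> L" using assms(2) by (simp add: subspace_neg)
      moreover have "(\<Sum>x\<in>T. \<mu> x *\<^sub>R x) = - (\<Sum>x\<in>BL. \<mu> x *\<^sub>R x)"
        using sp by (simp add: eq_neg_iff_add_eq_0 add.commute)
      ultimately have T0: "\<forall>c\<in>T. \<mu> c = 0" using assms(3) by auto
      then have "(\<Sum>x\<in>T. \<mu> x *\<^sub>R x) = 0" by simp
      then have "(\<Sum>x\<in>BL. \<mu> x *\<^sub>R x) = 0" using sp by simp
      then have "\<forall>c\<in>BL. \<mu> c = 0" using BL(2) fBL dependent_finite by blast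
      then show ?thesis using T0 v by blast
    qed
    then show ?thesis using dependent_finite[of "BL \<union> T"] fBL assms(1) by blast
  qed
  have "card (BL \<union> T) \<le> dim (span (L \<union> T))"
    by (rule independent_card_le_dim[OF _ ind]) (use BL(1) span_superset in blast)
  then show ?thesis using card_Un_disjoint[OF fBL assms(1) disj] BL(4) by simp
qed

lemma span_to_cone:
  fixes T :: "'a::euclidean_space set"
  assumes "finite T" "subspace L" "\<forall>c\<in>T. 0 < w c" "b + (\<Sum>c\<in>T. w c *\<^sub>R c) \<in> L"
    "x \<in> span (L \<union> T)"
  shows "\<exists>l\<in>L. x - l \<in> cch (insert b T)"
proof -
  obtain y z where yz: "x = y + z" "y \<in> span L" "z \<in> span T"
    using assms(5) span_Un by blast
  have yL: "y \<in> L" using yz(2) assms(2) by (metis span_eq_iff)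
  obtain \<alpha> where z: "z = (\<Sum>c\<in>T. \<alpha> c *\<^sub>R c)" using yz(3) span_finite[OF assms(1)] by auto
  define t where "t = (\<Sum>c\<in>T. \<bar>\<alpha> c\<bar> / w c)"
  have t0: "0 \<le> t" unfolding t_def using assms(3) by (intro sum_nonneg) auto
  have tc: "\<bar>\<alpha> c\<bar> \<le> t * w c" if "c \<in> T" for c
  proof -
    have "\<bar>\<alpha> c\<bar> / w c \<le> t" unfolding t_def using assms(1,3) that
      by (intro member_le_sum) auto
    then show ?thesis using assms(3) that by (simp add: divide_le_eq)
  qed
  define l where "l = y - t *\<^sub>R (b + (\<Sum>c\<in>T. w c *\<^sub>R c))"
  have lL: "l \<in> L" using yL assms(2,4) by (simp add: l_def subspace_diff subspace_mul)
  have "x - l = t *\<^sub>R b + (\<Sum>c\<in>T. (\<alpha> c + t * w c) *\<^sub>R c)"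
    by (simp add: l_def yz(1) z scaleR_add_left sum.distrib scaleR_sum_right algebra_simps)
  also have "\<dots> \<in> cch (insert b T)"
  proof (rule convex_cone_hull_add)
    show "t *\<^sub>R b \<in> cch (insert b T)" using t0 by (simp add: convex_cone_hull_mul hull_inc)
    show "(\<Sum>c\<in>T. (\<alpha> c + t * w c) *\<^sub>R c) \<in> cch (insert b T)"
      using assms(1) tc by (intro cch_sum) (auto, smt (verit) abs_ge_minus_self)
  qed
  finally show ?thesis using lL by blast
qed

definition cov :: "'a::euclidean_space set \<Rightarrow> 'a set \<Rightarrow> bool" where
  "cov L X \<longleftrightarrow> (\<forall>v. \<exists>l\<in>L. v - l \<in> cch X)"

lemma steinitz_mod:
  fixes B :: "'a::euclidean_space set"
  assumes "finite B" "subspace L" "cov L B"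
  shows "\<exists>S\<subseteq>B. card S \<le> 2 * (DIM('a) - dim L) \<and> cov L S"
  using assms
proof (induction "DIM('a) - dim L" arbitrary: L rule: less_induct)
  case less
  show ?case
  proof (cases "\<forall>v. v \<in> L")
    case True
    then have "cov L {}" unfolding cov_def
      by (metis convex_cone_hull_contains_0 diff_self)
    then show ?thesis by (intro exI[of _ "{}"]) auto
  next
    case False
    then obtain v where v: "v \<notin> L" by blast
    have "\<exists>b\<in>B. b \<notin> L"
    proof (rule ccontr)
      assume "\<not> ?thesis" then have "B \<subseteq> L" by blast
      then have cL: "cch B \<subseteq> L"
        by (intro hull_minimal) (simp_all add: less.prems(2) subspace_imp_convex_cone)
      obtain l where "l \<in> L" "v - l \<in> cch B" using less.prems(3) unfolding cov_def by blast
      then have "l + (v - l) \<in> L" using cL less.prems(2) by (meson subsetD subspace_add)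
      then show False using v by simp
    qed
    then obtain b where b: "b \<in> B" "b \<notin> L" by blast
    obtain l where l: "l \<in> L" "-b - l \<in> cch B" using less.prems(3) unfolding cov_def by blast
    obtain u where u: "\<forall>c\<in>B. 0 \<le> u c" "-b - l = (\<Sum>c\<in>B. u c *\<^sub>R c)"
      using cch_explicit[OF less.prems(1) l(2)] by blast
    have "-b - (\<Sum>c\<in>B. u c *\<^sub>R c) \<in> L" unfolding u(2)[symmetric] using l(1) by simp
    from cara_mod[OF less.prems(1,2) u(1) this] obtain T w where
      T: "T \<subseteq> B" "\<forall>c\<in>T. 0 < w c" "-b - (\<Sum>c\<in>T. w c *\<^sub>R c) \<in> L"
         "\<forall>\<mu>. (\<Sum>c\<in>T. \<mu> c *\<^sub>R c) \<in> L \<longrightarrow> (\<forall>c\<in>T. \<mu> c = 0)" by blast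
    have fT: "finite T" using T(1) less.prems(1) finite_subset by blast
    have bT: "b + (\<Sum>c\<in>T. w c *\<^sub>R c) \<in> L"
      using subspace_neg[OF less.prems(2) T(3)] by (simp add: add.commute)
    have Tne: "T \<noteq> {}"
    proof
      assume "T = {}" then show False using bT b by simp
    qed
    define L' where "L' = span (L \<union> T)"
    have dimL': "dim L + card T \<le> dim L'" using dim_mod[OF fT less.prems(2) T(4)] L'_def by simp
    have cT: "card T > 0" using fT Tne by auto
    have dimle: "dim L' \<le> DIM('a)" by (rule dim_subset_UNIV)
    have covL': "cov L' B"
      unfolding cov_def
    proof
      fix v
      obtain l where "l \<in> L" "v - l \<in> cch B" using less.prems(3) unfolding cov_def by blast
      moreover have "l \<in> L'" using \<open>l \<in> L\<close> span_superset[of "L \<union> T"] unfolding L'_def by blast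
      ultimately show "\<exists>l\<in>L'. v - l \<in> cch B" by blast
    qed
    have "DIM('a) - dim L' < DIM('a) - dim L" using dimL' dimle cT by linarith
    from less.hyps[OF this less.prems(1) _ covL'] obtain S' where
      S': "S' \<subseteq> B" "card S' \<le> 2 * (DIM('a) - dim L')" "cov L' S'"
      unfolding L'_def by auto
    define S where "S = insert b (S' \<union> T)"
    have fS': "finite S'" using S'(1) less.prems(1) finite_subset by blast
    have "card S \<le> Suc (card (S' \<union> T))"
      unfolding S_def using fS' fT by (simp add: card_insert_if)
    moreover have "card (S' \<union> T) \<le> card S' + card T" by (rule card_Un_le)
    ultimately have "card S \<le> card S' + card T + 1" by linarith
    then have cardS: "card S \<le> 2 * (DIM('a) - dim L)" using S'(2) dimL' dimle cT by linarith
    have "cov L S" unfolding cov_def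
    proof
      fix v
      obtain l' where l': "l' \<in> L'" "v - l' \<in> cch S'" using S'(3) unfolding cov_def by blast
      obtain l where l: "l \<in> L" "l' - l \<in> cch (insert b T)"
        using span_to_cone[OF fT less.prems(2) T(2) bT] l'(1) unfolding L'_def by blast
      have "(v - l') + (l' - l) \<in> cch S"
        apply (rule convex_cone_hull_add)
        using l'(2) l(2) hull_mono[of S' S] hull_mono[of "insert b T" S] unfolding S_def by auto
      moreover have "(v - l') + (l' - l) = v - l" by simp
      ultimately show "\<exists>l\<in>L. v - l \<in> cch S" using l(1) by auto
    qed
    moreover have "S \<subseteq> B" unfolding S_def using S'(1) T(1) b(1) by auto
    ultimately show ?thesis using cardS by blast
  qed
qed

theorem lemma13:
  fixes H :: "(real^'n) set set" and k :: 'n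
  assumes "CARD('n) \<ge> 2"
    and "finite H"
    and "\<forall>h\<in>H. origin_halfspace h"
    and "\<forall>h\<in>H. frontier h \<noteq> {x. x $ k = 0}"
    and "\<Inter>H \<subseteq> {x. x $ k > 0} \<union> {0}"
  shows "\<exists>H'\<subseteq>H. card H' \<le> 2 * CARD('n) - 2 \<and> \<Inter>H' \<subseteq> {x. x $ k > 0} \<union> {0}"
proof -
  define e :: "real^'n" where "e = axis k 1"
  have einner: "inner e x = x $ k" for x unfolding e_def by (simp add: inner_axis')
  have e0: "e \<noteq> 0" unfolding e_def by (simp add: axis_eq_0_iff)
  have ex: "\<forall>h\<in>H. \<exists>a. a \<noteq> 0 \<and> h = {x. inner a x \<le> 0}"
    using assms(3) unfolding origin_halfspace_def by blast
  define a :: "(real^'n) set \<Rightarrow> real^'n" where "a = (\<lambda>h. SOME a. a \<noteq> 0 \<and> h = {x. inner a x \<le> 0})"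
  have a: "a h \<noteq> 0 \<and> h = {x. inner (a h) x \<le> 0}" if "h \<in> H" for h
    unfolding a_def by (rule someI_ex) (use ex that in blast)
  have inj: "inj_on a H"
  proof
    fix h1 h2 assume h12: "h1 \<in> H" "h2 \<in> H" "a h1 = a h2"
    have "h1 = {x. inner (a h1) x \<le> 0}" using a[OF h12(1)] by blast
    also have "\<dots> = {x. inner (a h2) x \<le> 0}" using h12(3) by simp
    also have "\<dots> = h2" using a[OF h12(2)] by blast
    finally show "h1 = h2" .
  qed
  define A where "A = a ` H"
  have fA: "finite A" using assms(2) unfolding A_def by simp
  have nopar: "c \<noteq> t *\<^sub>R e" if cA: "c \<in> A" for c t
  proof
    assume ce: "c = t *\<^sub>R e"
    obtain h where h: "h \<in> H" "c = a h" using cA unfolding A_def by blast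
    have t0: "t \<noteq> 0" using a[OF h(1)] h ce by auto
    have "frontier h = {x. inner c x = 0}"
      using a[OF h(1)] h frontier_halfspace_le[of c 0] by auto
    also have "\<dots> = {x. x $ k = 0}" using t0 by (simp add: ce einner)
    finally show False using assms(4) h(1) by blast
  qed
  have eA: "e \<notin> A" using nopar[of e 1] by auto
  define K where "K = cch (insert e A)"
  have full: "K = UNIV"
  proof (rule ccontr)
    assume "K \<noteq> UNIV"
    then obtain z where z: "z \<notin> K" by blast
    obtain w \<beta> where wb: "inner w z < \<beta>" "\<forall>x\<in>K. inner w x > \<beta>"
      using separating_hyperplane_closed_point[OF _ _ z] unfolding K_def
      using convex_convex_cone_hull closed_convex_cone_hull fA by blast
    have "0 \<in> K" unfolding K_def by (rule convex_cone_hull_contains_0)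
    then have b0: "\<beta> < 0" using wb by auto
    have nn: "inner w x \<ge> 0" if x: "x \<in> K" for x
    proof (rule ccontr)
      assume neg: "\<not> inner w x \<ge> 0"
      define t where "t = \<beta> / inner w x + 1"
      have "\<beta> / inner w x > 0" using neg b0 by (simp add: divide_neg_neg)
      then have tpos: "t > 0" unfolding t_def by simp
      have "t *\<^sub>R x \<in> K" using x tpos unfolding K_def by (simp add: convex_cone_hull_mul)
      then have "inner w (t *\<^sub>R x) > \<beta>" using wb by blast
      moreover have "inner w (t *\<^sub>R x) = \<beta> + inner w x"
        using neg by (simp add: t_def algebra_simps)
      ultimately show False using neg by simp
    qed
    define y where "y = - w"
    have "w \<noteq> 0" using wb b0 by auto
    then have y0: "y \<noteq> 0" unfolding y_def by simp
    have "y \<in> \<Inter>H"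
    proof
      fix h assume h: "h \<in> H"
      have "a h \<in> K" unfolding K_def A_def using h by (simp add: hull_inc)
      then have "inner w (a h) \<ge> 0" using nn by blast
      then have "inner (a h) y \<le> 0" unfolding y_def by (simp add: inner_commute)
      then show "y \<in> h" using a[OF h] by blast
    qed
    moreover have "e \<in> K" unfolding K_def by (simp add: hull_inc)
    then have "inner w e \<ge> 0" using nn by blast
    then have "y $ k \<le> 0" unfolding y_def using einner[of w] by (simp add: inner_commute)
    ultimately have "y \<in> {x. x $ k > 0} \<union> {0}" using assms(5) by blast
    then show False using y0 \<open>y $ k \<le> 0\<close> by auto
  qed
  have "-e \<in> K" using full by simp
  then obtain u where u: "\<forall>c\<in>insert e A. 0 \<le> u c" "-e = (\<Sum>c\<in>insert e A. u c *\<^sub>R c)"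
    using cch_explicit[of "insert e A"] fA unfolding K_def by blast
  define s where "s = 1 + u e"
  have s0: "s > 0" using u(1) unfolding s_def by (smt (verit) insertI1)
  have "-e = u e *\<^sub>R e + (\<Sum>c\<in>A. u c *\<^sub>R c)" using u(2) fA eA by simp
  then have "(\<Sum>c\<in>A. u c *\<^sub>R c) = - (s *\<^sub>R e)" unfolding s_def by (simp add: algebra_simps)
  moreover have "(\<Sum>c\<in>A. (u c / s) *\<^sub>R c) = inverse s *\<^sub>R (\<Sum>c\<in>A. u c *\<^sub>R c)"
    by (simp add: scaleR_sum_right divide_inverse_commute)
  ultimately have "(\<Sum>c\<in>A. (u c / s) *\<^sub>R c) = - e"
    using s0 by simp
  then have "-e - (\<Sum>c\<in>A. (u c / s) *\<^sub>R c) \<in> {0}" by simp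
  moreover have "\<forall>c\<in>A. 0 \<le> u c / s" using u(1) s0 by simp
  ultimately obtain T w where T: "T \<subseteq> A" "\<forall>c\<in>T. 0 < w c" "-e - (\<Sum>c\<in>T. w c *\<^sub>R c) \<in> {0}"
         "\<forall>\<mu>. (\<Sum>c\<in>T. \<mu> c *\<^sub>R c) \<in> {0} \<longrightarrow> (\<forall>c\<in>T. \<mu> c = 0)"
    using cara_mod[OF fA subspace_single_0, of "\<lambda>c. u c / s" "-e"] by blast
  have fT: "finite T" using T(1) fA finite_subset by blast
  have eT: "-e = (\<Sum>c\<in>T. w c *\<^sub>R c)" using T(3) by simp
  have be: "e + (\<Sum>c\<in>T. w c *\<^sub>R c) \<in> {0}" unfolding eT[symmetric] by simp
  have cT: "card T \<ge> 2"
  proof -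
    have "T \<noteq> {}" using eT e0 by auto
    then have "card T \<noteq> 0" using fT by simp
    moreover have "card T \<noteq> 1"
    proof
      assume "card T = 1"
      then obtain c where c: "T = {c}" by (auto simp: card_1_singleton_iff)
      then have "-e = w c *\<^sub>R c" using eT by simp
      then have we: "w c *\<^sub>R c = - e" by simp
      have wc: "w c > 0" using T(2) c by simp
      have "c = (1 / w c) *\<^sub>R (w c *\<^sub>R c)" using wc by simp
      also have "\<dots> = (- 1 / w c) *\<^sub>R e" unfolding we by simp
      finally have "c = (- 1 / w c) *\<^sub>R e" .
      moreover have "c \<in> A" using T(1) c by blast
      ultimately show False using nopar[of c "- 1 / w c"] by blast
    qed
    ultimately show ?thesis by linarith
  qed
  define L where "L = span ({0} \<union> T)"
  have dimL: "card T \<le> dim L" using dim_mod[OF fT subspace_single_0 T(4)] unfolding L_def by simp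
  have eL: "e \<in> L"
  proof -
    have "(\<Sum>c\<in>T. w c *\<^sub>R c) \<in> L" unfolding L_def
      by (intro span_sum span_scale) (simp add: span_base)
    then have "- (\<Sum>c\<in>T. w c *\<^sub>R c) \<in> L" unfolding L_def by (rule span_neg)
    then show ?thesis using eT by (metis minus_minus)
  qed
  have covA: "cov L A" unfolding cov_def
  proof
    fix v
    have "v \<in> K" using full by simp
    then obtain u' where u': "\<forall>c\<in>insert e A. 0 \<le> u' c" "v = (\<Sum>c\<in>insert e A. u' c *\<^sub>R c)"
      using cch_explicit[of "insert e A"] fA unfolding K_def by blast
    have "v = u' e *\<^sub>R e + (\<Sum>c\<in>A. u' c *\<^sub>R c)" using u'(2) fA eA by simp
    moreover have "u' e *\<^sub>R e \<in> L" using eL unfolding L_def by (simp add: span_scale)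
    moreover have "(\<Sum>c\<in>A. u' c *\<^sub>R c) \<in> cch A" using u'(1) fA by (intro cch_sum) auto
    ultimately show "\<exists>l\<in>L. v - l \<in> cch A" by (intro bexI[of _ "u' e *\<^sub>R e"]) auto
  qed
  obtain S' where S': "S' \<subseteq> A" "card S' \<le> 2 * (DIM(real^'n) - dim L)" "cov L S'"
    using steinitz_mod[OF fA _ covA] unfolding L_def by auto
  define S where "S = S' \<union> T"
  have SA: "S \<subseteq> A" unfolding S_def using S'(1) T(1) by auto
  have dimle: "dim L \<le> CARD('n)" by (rule dim_subset_UNIV_cart)
  have "card S \<le> card S' + card T" unfolding S_def by (rule card_Un_le)
  then have cardS: "card S \<le> 2 * CARD('n) - 2" using S'(2) dimL dimle cT by simp
  have fullS: "cch (insert e S) = UNIV"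
  proof (rule set_eqI, rule iffI)
    fix v :: "real^'n"
    obtain l where l: "l \<in> L" "v - l \<in> cch S'" using S'(3) unfolding cov_def by blast
    obtain l0 where l0: "l0 \<in> {0}" "l - l0 \<in> cch (insert e T)"
      using span_to_cone[OF fT subspace_single_0 T(2) be, of l] l(1) unfolding L_def by blast
    have "(v - l) + l \<in> cch (insert e S)"
      apply (rule convex_cone_hull_add)
      using l(2) l0 hull_mono[of S' "insert e S"] hull_mono[of "insert e T" "insert e S"]
      unfolding S_def by auto
    then show "v \<in> cch (insert e S)" by simp
  qed simp
  define H' where "H' = {h\<in>H. a h \<in> S}"
  have imgH': "a ` H' = S" using SA unfolding H'_def A_def by auto
  have "card H' = card S"
    using imgH' card_image[of a H'] inj_on_subset[OF inj] unfolding H'_def by auto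
  then have cardH': "card H' \<le> 2 * CARD('n) - 2" using cardS by simp
  have "\<Inter>H' \<subseteq> {x. x $ k > 0} \<union> {0}"
  proof
    fix x assume x: "x \<in> \<Inter>H'"
    show "x \<in> {x. x $ k > 0} \<union> {0}"
    proof (rule ccontr)
      assume nx: "x \<notin> {x. x $ k > 0} \<union> {0}"
      define N where "N = {c. inner c x \<le> 0}"
      have cN: "convex_cone N" unfolding convex_cone_iff N_def
        by (auto simp: inner_add_left mult_nonneg_nonpos)
      have "insert e S \<subseteq> N"
      proof
        fix c assume "c \<in> insert e S"
        then consider "c = e" | "c \<in> S" by blast
        then show "c \<in> N"
        proof cases
          case 1 then show ?thesis using nx einner unfolding N_def by auto
        next
          case 2
          then obtain h where h: "h \<in> H'" "c = a h" using imgH' by blast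
          have "x \<in> h" using x h by blast
          then show ?thesis using a[of h] h unfolding N_def H'_def by auto
        qed
      qed
      then have "cch (insert e S) \<subseteq> N" using cN by (simp add: hull_minimal)
      then have "x \<in> N" using fullS by blast
      then have "inner x x \<le> 0" unfolding N_def by simp
      then have "x = 0" by (metis inner_eq_zero_iff inner_ge_zero order_antisym)
      then show False using nx by simp
    qed
  qed
  moreover have "H' \<subseteq> H" unfolding H'_def by blast
  ultimately show ?thesis using cardH' by blast
qed

end
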